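(* Let $1\le l_1\le l_2\le\cdots\le l_n$ be integers and $A=\{a_1^{2^{l_1}-1},\ldots,a_n^{2^{l_n}-1}\}$. Then for every integer $m\ge0$, $$|C_m(A)|=\sum\prod_{i=1}^{l_n}\binom{\overline{k_{2^{i-1}}}}{\lambda_i},$$ the sum over all tuples $(\lambda_1,\ldots,\lambda_{l_n})$ of non-negative integers with $\lambda_1+2\lambda_2+2^2\lambda_3+\cdots+2^{l_n-1}\lambda_{l_n}=m$ and $\lambda_i\le\overline{k_{2^{i-1}}}$ for $i=1,\ldots,l_n$.
   Context: A multiset $A=\{a_1^{k_1},\ldots,a_n^{k_n}\}$ consists of distinct elements $a_1,\ldots,a_n$ with positive integer multiplicities $k_1,\ldots,k_n$ (here $k_i=2^{l_i}-1$). A submultiset of $A$ is a multiset $\{a_1^{r_1},\ldots,a_n^{r_n}\}$ with integers $0\le r_i\le k_i$, of cardinality $r_1+\cdots+r_n$. $C_m(A)$ denotes the set of all submultisets of $A$ of cardinality $m$. For each integer $j\ge1$, $\overline{k_j}=|\{i\in\{1,\ldots,n\}: k_i\ge j\}|$. *)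

theory Defs
  imports "HOL-Library.Multiset"
begin

definition multiset_of :: "nat \<Rightarrow> (nat \<Rightarrow> 'a) \<Rightarrow> (nat \<Rightarrow> nat) \<Rightarrow> 'a multiset" where
  "multiset_of n a k = (\<Sum>i\<in>{1..n}. replicate_mset (k i) (a i))"

definition C :: "nat \<Rightarrow> 'a multiset \<Rightarrow> 'a multiset set" where
  "C m A = {B. B \<subseteq># A \<and> size B = m}"

definition kbar :: "nat \<Rightarrow> (nat \<Rightarrow> nat) \<Rightarrow> nat \<Rightarrow> nat" where
  "kbar n k j = card {i\<in>{1..n}. k i \<ge> j}"

end

theory Submission imports Defs "HOL-Library.FuncSet" begin

lemma bitsum: "bit (\<Sum>k<L. of_bool (b k) * 2^k :: nat) j \<longleftrightarrow> j < L \<and> b j"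
proof -
  have "(\<Sum>k<L. of_bool (b k) * 2^k :: nat) = horner_sum of_bool 2 (map b [0..<L])"
    by (simp add: horner_sum_eq_sum lessThan_atLeast0)
  then show ?thesis by (auto simp only: bit_horner_sum_bit_iff possible_bit_def) (auto simp: nth_map_upt)
qed

lemma bitrecon: "(r::nat) < 2^L \<Longrightarrow> (\<Sum>k<L. of_bool (bit r k) * 2^k) = r"
  using take_bit_sum[of L r] take_bit_nat_eq_self[of r L]
  by (simp add: push_bit_eq_mult lessThan_atLeast0 mult.commute)

lemma bit_lt: "(x::nat) < 2^k \<Longrightarrow> bit x j \<Longrightarrow> j < k"
  by (metis bit_take_bit_iff take_bit_nat_eq_self)

lemma bitsum_lt:
  assumes "\<And>k. k < L \<Longrightarrow> b k \<Longrightarrow> k < K"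
  shows "(\<Sum>k<L. of_bool (b k) * 2^k :: nat) < 2^K"
proof -
  let ?x = "(\<Sum>k<L. of_bool (b k) * 2^k :: nat)"
  have "take_bit K ?x = ?x"
    by (rule bit_eqI) (unfold bit_take_bit_iff bitsum, use assms in auto)
  then show ?thesis by (metis take_bit_nat_less_exp)
qed

lemma count_mo: "inj_on a {1..n} \<Longrightarrow> i \<in> {1..n} \<Longrightarrow> count (multiset_of n a k) (a i) = k i"
  unfolding multiset_of_def
  by (simp add: count_sum inj_on_eq_iff cong: if_cong)

lemma count_mo0: "x \<notin> a ` {1..n} \<Longrightarrow> count (multiset_of n a k) x = 0"
  unfolding multiset_of_def by (auto simp: count_sum)

lemma size_mo: "size (multiset_of n a k) = sum k {1..n}"
  unfolding multiset_of_def by (induction n) auto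

lemma step1:
  assumes inj: "inj_on a {1..n}"
  shows "card (C m (multiset_of n a k)) = card {r::nat\<Rightarrow>nat. (\<forall>i. i \<notin> {1..n} \<longrightarrow> r i = 0) \<and> (\<forall>i\<in>{1..n}. r i \<le> k i) \<and> sum r {1..n} = m}"
    (is "card ?C = card ?R")
proof -
  let ?A = "multiset_of n a k"
  define f where "f B = (\<lambda>i. if i \<in> {1..n} then count B (a i) else 0)" for B :: "'a multiset"
  define g where "g r = multiset_of n a r" for r
  have fg: "g (f B) = B" if "B \<in> ?C" for B
  proof (rule multiset_eqI)
    fix x
    show "count (g (f B)) x = count B x"
    proof (cases "x \<in> a ` {1..n}")
      case True
      then obtain i where i: "i \<in> {1..n}" "x = a i" by auto
      then show ?thesis unfolding g_def using count_mo[OF inj i(1)] by (simp add: f_def)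
    next
      case False
      have "count B x \<le> count ?A x" using that unfolding C_def by (simp add: mset_subset_eq_count)
      then show ?thesis using False count_mo0[OF False] unfolding g_def by simp
    qed
  qed
  have gf: "f (g r) = r" if "r \<in> ?R" for r
    using that count_mo[OF inj] unfolding f_def g_def by (auto simp: fun_eq_iff)
  have "bij_betw f ?C ?R"
  proof (rule bij_betw_byWitness[where f' = g])
    show "\<forall>B\<in>?C. g (f B) = B" using fg by blast
    show "\<forall>r\<in>?R. f (g r) = r" using gf by blast
    show "f ` ?C \<subseteq> ?R"
    proof
      fix r assume "r \<in> f ` ?C"
      then obtain B where B: "B \<in> ?C" "r = f B" by auto
      have "\<forall>i\<in>{1..n}. r i \<le> k i"
      proof
        fix i assume i: "i \<in> {1..n}"
        have "count B (a i) \<le> count ?A (a i)" using B(1) unfolding C_def by (simp add: mset_subset_eq_count)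
        then show "r i \<le> k i" using count_mo[OF inj i] B(2) i by (simp add: f_def)
      qed
      moreover have "sum r {1..n} = m"
      proof -
        have "size (g (f B)) = m" using fg[OF B(1)] B(1) unfolding C_def by simp
        then show ?thesis unfolding g_def size_mo B(2) .
      qed
      ultimately show "r \<in> ?R" using B(2) by (auto simp: f_def)
    qed
    show "g ` ?R \<subseteq> ?C"
    proof
      fix B assume "B \<in> g ` ?R"
      then obtain r where r: "r \<in> ?R" "B = g r" by auto
      have "B \<subseteq># ?A"
      proof (rule mset_subset_eqI)
        fix x
        show "count B x \<le> count ?A x"
        proof (cases "x \<in> a ` {1..n}")
          case True
          then obtain i where i: "i \<in> {1..n}" "x = a i" by auto
          then show ?thesis using r count_mo[OF inj i(1)] count_mo[OF inj i(1), of r] unfolding g_def by auto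
        next
          case False
          then show ?thesis using r count_mo0[OF False] unfolding g_def by simp
        qed
      qed
      moreover have "size B = m" using r unfolding g_def by (simp add: size_mo)
      ultimately show "B \<in> ?C" unfolding C_def by simp
    qed
  qed
  then show ?thesis by (rule bij_betw_same_card)
qed

lemma step2:
  fixes T :: "nat \<Rightarrow> nat set"
  assumes fin: "\<And>j. finite (T j)"
  shows "card {S \<in> PiE {1..L} (\<lambda>j. Pow (T j)). (\<Sum>j\<in>{1..L}. 2^(j-1) * card (S j)) = m}
    = (\<Sum>lam\<in>{lam :: nat \<Rightarrow> nat. (\<forall>i. i \<notin> {1..L} \<longrightarrow> lam i = 0)
         \<and> (\<forall>i\<in>{1..L}. lam i \<le> card (T i)) \<and> (\<Sum>i\<in>{1..L}. 2 ^ (i - 1) * lam i) = m}.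
       \<Prod>i\<in>{1..L}. card (T i) choose lam i)"
    (is "card ?F = sum ?h ?Lam")
proof -
  define P where "P lam = PiE {1..L} (\<lambda>j. {X. X \<subseteq> T j \<and> card X = lam j})" for lam :: "nat \<Rightarrow> nat"
  have finLam: "finite ?Lam"
  proof (rule finite_subset)
    show "?Lam \<subseteq> (\<lambda>(g::nat\<Rightarrow>nat) i. if i \<in> {1..L} then g i else 0) ` PiE {1..L} (\<lambda>i. {0..card (T i)})"
    proof
      fix lam assume lam: "lam \<in> ?Lam"
      have "lam = (\<lambda>i. if i \<in> {1..L} then restrict lam {1..L} i else 0)"
        using lam by (auto simp: fun_eq_iff)
      moreover have "restrict lam {1..L} \<in> PiE {1..L} (\<lambda>i. {0..card (T i)})" using lam by auto
      ultimately show "lam \<in> (\<lambda>(g::nat\<Rightarrow>nat) i. if i \<in> {1..L} then g i else 0) ` PiE {1..L} (\<lambda>i. {0..card (T i)})"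
        by blast
    qed
    show "finite ((\<lambda>(g::nat\<Rightarrow>nat) i. if i \<in> {1..L} then g i else 0) ` PiE {1..L} (\<lambda>i. {0..card (T i)}))"
      by (intro finite_imageI finite_PiE) auto
  qed
  have cardP: "card (P lam) = (\<Prod>i\<in>{1..L}. card (T i) choose lam i)" for lam
    unfolding P_def by (simp add: card_PiE n_subsets fin)
  have FU: "?F = (\<Union>lam\<in>?Lam. P lam)"
  proof
    show "?F \<subseteq> (\<Union>lam\<in>?Lam. P lam)"
    proof
      fix S assume S: "S \<in> ?F"
      define lam where "lam i = (if i \<in> {1..L} then card (S i) else 0)" for i
      have "lam \<in> ?Lam"
        using S fin by (auto simp: lam_def PiE_def Pi_def intro!: card_mono)
      moreover have "S \<in> P lam" using S by (auto simp: P_def lam_def PiE_def Pi_def)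
      ultimately show "S \<in> (\<Union>lam\<in>?Lam. P lam)" by blast
    qed
    show "(\<Union>lam\<in>?Lam. P lam) \<subseteq> ?F"
    proof
      fix S assume "S \<in> (\<Union>lam\<in>?Lam. P lam)"
      then obtain lam where lam: "lam \<in> ?Lam" "S \<in> P lam" by blast
      have "(\<Sum>j\<in>{1..L}. 2^(j-1) * card (S j)) = (\<Sum>j\<in>{1..L}. 2^(j-1) * lam j)"
        using lam(2) by (intro sum.cong) (auto simp: P_def PiE_def Pi_def)
      then show "S \<in> ?F" using lam by (auto simp: P_def PiE_def Pi_def)
    qed
  qed
  have "card (\<Union>lam\<in>?Lam. P lam) = (\<Sum>lam\<in>?Lam. card (P lam))"
  proof (rule card_UN_disjoint[OF finLam])
    show "\<forall>lam\<in>?Lam. finite (P lam)" unfolding P_def using fin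
      by (auto intro!: finite_PiE)
    show "\<forall>lam\<in>?Lam. \<forall>lam'\<in>?Lam. lam \<noteq> lam' \<longrightarrow> P lam \<inter> P lam' = {}"
    proof (intro ballI impI)
      fix lam lam' assume l: "lam \<in> ?Lam" "lam' \<in> ?Lam" "lam \<noteq> lam'"
      show "P lam \<inter> P lam' = {}"
      proof (rule ccontr)
        assume "P lam \<inter> P lam' \<noteq> {}"
        then obtain S where "S \<in> P lam" "S \<in> P lam'" by blast
        then have "\<forall>i\<in>{1..L}. lam i = lam' i" unfolding P_def by (auto simp: PiE_def Pi_def)
        then have "lam = lam'" using l(1,2) by (auto simp: fun_eq_iff)
        then show False using l(3) by simp
      qed
    qed
  qed
  then show ?thesis using FU cardP by simp
qed

lemma lt_pow: "(x::nat) \<le> 2^k - 1 \<Longrightarrow> x < 2^k"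
proof -
  assume "x \<le> 2^k - 1"
  moreover have "(0::nat) < 2^k" by simp
  ultimately show ?thesis by linarith
qed

lemma reindex1: "(\<Sum>j\<in>{1..L}. f j) = (\<Sum>k<L. f (Suc k) :: nat)"
  by (induction L) auto

lemma step3:
  fixes l :: "nat \<Rightarrow> nat"
  assumes lL: "\<And>i. i \<in> {1..n} \<Longrightarrow> l i \<le> L"
  defines "T \<equiv> (\<lambda>j. {i\<in>{1..n}. j \<le> l i})"
  shows "card {r::nat\<Rightarrow>nat. (\<forall>i. i \<notin> {1..n} \<longrightarrow> r i = 0) \<and> (\<forall>i\<in>{1..n}. r i \<le> 2 ^ l i - 1) \<and> sum r {1..n} = m}
    = card {S \<in> PiE {1..L} (\<lambda>j. Pow (T j)). (\<Sum>j\<in>{1..L}. 2^(j-1) * card (S j)) = m}"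
    (is "card ?R = card ?F")
proof -
  define \<Phi> where "\<Phi> S = (\<lambda>i. if i \<in> {1..n} then (\<Sum>k<L. of_bool (i \<in> S (Suc k)) * 2^k) else 0::nat)"
    for S :: "nat \<Rightarrow> nat set"
  define \<Psi> where "\<Psi> r = restrict (\<lambda>j. {i\<in>{1..n}. bit (r i) (j-1)}) {1..L}" for r :: "nat \<Rightarrow> nat"
  have Tsub: "T j \<subseteq> {1..n}" for j unfolding T_def by auto
  have weight: "(\<Sum>i\<in>{1..n}. \<Phi> S i) = (\<Sum>j\<in>{1..L}. 2^(j-1) * card (S j))"
    if S: "S \<in> PiE {1..L} (\<lambda>j. Pow (T j))" for S
  proof -
    have "(\<Sum>i\<in>{1..n}. \<Phi> S i) = (\<Sum>i\<in>{1..n}. \<Sum>k<L. of_bool (i \<in> S (Suc k)) * 2^k)"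
      unfolding \<Phi>_def by simp
    also have "\<dots> = (\<Sum>k<L. \<Sum>i\<in>{1..n}. of_bool (i \<in> S (Suc k)) * 2^k)"
      by (rule sum.swap)
    also have "\<dots> = (\<Sum>k<L. 2^k * card (S (Suc k)))"
    proof (rule sum.cong[OF refl])
      fix k assume k: "k \<in> {..<L}"
      have "S (Suc k) \<subseteq> T (Suc k)" using S k by (auto simp: PiE_def Pi_def)
      then have "S (Suc k) \<subseteq> {1..n}" using Tsub[of "Suc k"] by blast
      then have "{1..n} \<inter> {i. i \<in> S (Suc k)} = S (Suc k)" by auto
      then show "(\<Sum>i\<in>{1..n}. of_bool (i \<in> S (Suc k)) * 2^k) = 2^k * card (S (Suc k))"
        by (simp add: sum_distrib_right[symmetric] mult.commute)
    qed
    also have "\<dots> = (\<Sum>j\<in>{1..L}. 2^(j-1) * card (S j))"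
      using reindex1[of "\<lambda>j. 2^(j-1) * card (S j)" L] by simp
    finally show ?thesis .
  qed
  have PsiPhi: "\<Psi> (\<Phi> S) = S" if S: "S \<in> ?F" for S
  proof (rule ext)
    fix j
    show "\<Psi> (\<Phi> S) j = S j"
    proof (cases "j \<in> {1..L}")
      case True
      have "S j \<subseteq> T j" using S True by (auto simp: PiE_def Pi_def)
      then have sj: "S j \<subseteq> {1..n}" using Tsub[of j] by blast
      have b: "bit (\<Phi> S i) (j-1) \<longleftrightarrow> i \<in> S j" if "i \<in> {1..n}" for i
      proof -
        have "bit (\<Phi> S i) (j-1) \<longleftrightarrow> j - 1 < L \<and> i \<in> S (Suc (j-1))"
          unfolding \<Phi>_def using that by (simp only: if_True bitsum)
        then show ?thesis using True by auto
      qed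
      have "{i\<in>{1..n}. bit (\<Phi> S i) (j-1)} = S j"
        using sj b by auto
      then show ?thesis using True by (simp add: \<Psi>_def)
    next
      case False
      then show ?thesis using S by (auto simp: \<Psi>_def PiE_def extensional_def)
    qed
  qed
  have PhiPsi: "\<Phi> (\<Psi> r) = r" if r: "r \<in> ?R" for r
  proof (rule ext)
    fix i
    show "\<Phi> (\<Psi> r) i = r i"
    proof (cases "i \<in> {1..n}")
      case True
      have "r i < 2 ^ l i" using r True by (auto intro: lt_pow)
      also have "\<dots> \<le> 2 ^ L" using lL[OF True] by simp
      finally have lt: "r i < 2 ^ L" .
      have "\<Phi> (\<Psi> r) i = (\<Sum>k<L. of_bool (bit (r i) k) * 2^k)"
        using True by (simp add: \<Phi>_def \<Psi>_def)
      then show ?thesis using bitrecon[OF lt] by simp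
    next
      case False
      have "r i = 0" using r False by blast
      then show ?thesis unfolding \<Phi>_def by (simp only: if_not_P[OF False])
    qed
  qed
  have "bij_betw \<Phi> ?F ?R"
  proof (rule bij_betw_byWitness[where f' = \<Psi>])
    show "\<forall>S\<in>?F. \<Psi> (\<Phi> S) = S" using PsiPhi by blast
    show "\<forall>r\<in>?R. \<Phi> (\<Psi> r) = r" using PhiPsi by blast
    show "\<Phi> ` ?F \<subseteq> ?R"
    proof
      fix r assume "r \<in> \<Phi> ` ?F"
      then obtain S where S: "S \<in> ?F" "r = \<Phi> S" by auto
      have "\<forall>i\<in>{1..n}. r i \<le> 2 ^ l i - 1"
      proof
        fix i assume i: "i \<in> {1..n}"
        have "(\<Sum>k<L. of_bool (i \<in> S (Suc k)) * 2^k :: nat) < 2 ^ l i"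
        proof (rule bitsum_lt)
          fix k assume "k < L" "i \<in> S (Suc k)"
          moreover have "S (Suc k) \<subseteq> T (Suc k)" using S \<open>k < L\<close> by (auto simp: PiE_def Pi_def)
          ultimately have "i \<in> T (Suc k)" by blast
          then show "k < l i" unfolding T_def by auto
        qed
        then show "r i \<le> 2 ^ l i - 1" using S(2) i by (simp add: \<Phi>_def)
      qed
      moreover have "sum r {1..n} = m" using weight[of S] S by simp
      ultimately show "r \<in> ?R" using S(2) by (auto simp: \<Phi>_def)
    qed
    show "\<Psi> ` ?R \<subseteq> ?F"
    proof
      fix S assume "S \<in> \<Psi> ` ?R"
      then obtain r where r: "r \<in> ?R" "S = \<Psi> r" by auto
      have SP: "S \<in> PiE {1..L} (\<lambda>j. Pow (T j))"
      proof -
        have "{i\<in>{1..n}. bit (r i) (j-1)} \<subseteq> T j" if "j \<in> {1..L}" for j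
        proof
          fix i assume i: "i \<in> {i\<in>{1..n}. bit (r i) (j-1)}"
          have "r i < 2 ^ l i" using r i by (auto intro: lt_pow)
          then have "j - 1 < l i" using i bit_lt by blast
          then show "i \<in> T j" using i that unfolding T_def by auto
        qed
        then show ?thesis using r(2) unfolding \<Psi>_def by auto
      qed
      have "(\<Sum>j\<in>{1..L}. 2^(j-1) * card (S j)) = (\<Sum>i\<in>{1..n}. \<Phi> S i)" using weight[OF SP] by simp
      also have "\<dots> = m" using PhiPsi[OF r(1)] r by simp
      finally show "S \<in> ?F" using SP by simp
    qed
  qed
  then show ?thesis by (simp add: bij_betw_same_card)
qed

lemma pow_iff: "1 \<le> j \<Longrightarrow> (2^(j-1) \<le> (2::nat)^L - 1) \<longleftrightarrow> j \<le> L"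
proof
  assume j: "1 \<le> j" and h: "2^(j-1) \<le> (2::nat)^L - 1"
  show "j \<le> L"
  proof (rule ccontr)
    assume "\<not> j \<le> L"
    then have "(2::nat)^L \<le> 2^(j-1)" by (intro power_increasing) auto
    moreover have "(0::nat) < 2^L" by simp
    ultimately show False using h by linarith
  qed
next
  assume j: "1 \<le> j" "j \<le> L"
  then have "(2::nat)^(j-1) < 2^L" by (intro power_strict_increasing) auto
  then show "2^(j-1) \<le> (2::nat)^L - 1" by linarith
qed

theorem theorem5p3:
  fixes n :: nat and l :: "nat \<Rightarrow> nat" and a :: "nat \<Rightarrow> 'a" and m :: nat
  assumes "n \<ge> 1"
    and "inj_on a {1..n}"
    and "l 1 \<ge> 1"
    and "\<And>i j. 1 \<le> i \<Longrightarrow> i \<le> j \<Longrightarrow> j \<le> n \<Longrightarrow> l i \<le> l j"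
  shows "card (C m (multiset_of n a (\<lambda>i. 2 ^ l i - 1))) =
    (\<Sum>lam\<in>{lam :: nat \<Rightarrow> nat.
           (\<forall>i. i \<notin> {1..l n} \<longrightarrow> lam i = 0)
         \<and> (\<forall>i\<in>{1..l n}. lam i \<le> kbar n (\<lambda>i. 2 ^ l i - 1) (2 ^ (i - 1)))
         \<and> (\<Sum>i\<in>{1..l n}. 2 ^ (i - 1) * lam i) = m}.
       \<Prod>i\<in>{1..l n}. kbar n (\<lambda>i. 2 ^ l i - 1) (2 ^ (i - 1)) choose lam i)"
proof -
  define T where "T = (\<lambda>j. {i\<in>{1..n}. j \<le> l i})"
  have kb: "kbar n (\<lambda>i. 2 ^ l i - 1) (2 ^ (j - 1)) = card (T j)" if "j \<in> {1..l n}" for j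
  proof -
    have "{i\<in>{1..n}. 2 ^ l i - 1 \<ge> (2::nat) ^ (j - 1)} = T j"
      unfolding T_def using that pow_iff[of j] by auto
    then show ?thesis unfolding kbar_def by simp
  qed
  have lL: "l i \<le> l n" if "i \<in> {1..n}" for i using assms(4)[of i n] that by auto
  have "card (C m (multiset_of n a (\<lambda>i. 2 ^ l i - 1))) =
     card {r::nat\<Rightarrow>nat. (\<forall>i. i \<notin> {1..n} \<longrightarrow> r i = 0) \<and> (\<forall>i\<in>{1..n}. r i \<le> 2 ^ l i - 1) \<and> sum r {1..n} = m}"
    by (rule step1[OF assms(2)])
  also have "\<dots> = card {S \<in> PiE {1..l n} (\<lambda>j. Pow (T j)). (\<Sum>j\<in>{1..l n}. 2^(j-1) * card (S j)) = m}"
    unfolding T_def by (rule step3) (rule lL)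
  also have "\<dots> = (\<Sum>lam\<in>{lam :: nat \<Rightarrow> nat. (\<forall>i. i \<notin> {1..l n} \<longrightarrow> lam i = 0)
         \<and> (\<forall>i\<in>{1..l n}. lam i \<le> card (T i)) \<and> (\<Sum>i\<in>{1..l n}. 2 ^ (i - 1) * lam i) = m}.
       \<Prod>i\<in>{1..l n}. card (T i) choose lam i)"
    by (rule step2) (simp add: T_def)
  also have "\<dots> = (\<Sum>lam\<in>{lam :: nat \<Rightarrow> nat.
           (\<forall>i. i \<notin> {1..l n} \<longrightarrow> lam i = 0)
         \<and> (\<forall>i\<in>{1..l n}. lam i \<le> kbar n (\<lambda>i. 2 ^ l i - 1) (2 ^ (i - 1)))
         \<and> (\<Sum>i\<in>{1..l n}. 2 ^ (i - 1) * lam i) = m}.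
       \<Prod>i\<in>{1..l n}. kbar n (\<lambda>i. 2 ^ l i - 1) (2 ^ (i - 1)) choose lam i)"
    using kb by (intro sum.cong prod.cong) auto
  finally show ?thesis .
qed

end
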